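(* For each $T\in\mathbb{N}$ let $\mathcal{F}^T_t:=\sigma(Z^T_1(r),\dots,Z^T_m(r):0\le r\le t)$, $t\in[0,T]$, and let $N_T$ be an $\{\mathcal{F}^T_t\}$-adapted non-homogeneous Poisson process with intensity $\lambda_T(t):=\lambda(t/T)$, where $\lambda:[0,1]\to\mathbb{R}_{>0}$ is deterministic and Hölder-continuous of order $\beta>0$ (similarly $\varsigma_T(t)=T^{-1/2}\varsigma(t/T)$ with $\varsigma:[0,1]\to\mathbb{R}_{>0}$ deterministic Hölder-continuous, and log-price $dP_T(t)=\varsigma_T(t)dB(N_T(t))$ with $B$ a Brownian motion independent of $N_T$, $B(N_T(t))$ adapted). Fix an integer $\overline{N}\ge1$ and define $\tau^{\mathrm{rTTS}}_j:=\inf\{t\le T:N_T(t)\ge j\overline{N}\}$ for integers $0\le j\le N_T(T)/\overline{N}$, with $M(T)=\lceil N_T(T)/\overline{N}\rceil$ and $\tau^{\mathrm{rTTS}}_{M(T)}=T$. Then for all constants $\zeta,\eta>0$, $$\mathbb{E}\Big[\frac{\max_j(\tau^{\mathrm{rTTS}}_j-\tau^{\mathrm{rTTS}}_{j-1})^\zeta}{T^\eta}\Big]\to0\quad(T\to\infty),$$ and in particular the sequence $\max_j(\tau^{\mathrm{rTTS}}_j-\tau^{\mathrm{rTTS}}_{j-1})^\zeta/T^\eta$ is uniformly integrable.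
   Context: Hölder-continuity of order $\beta$ means $|\lambda(t+\delta)-\lambda(t)|\le C\delta^\beta$ for all $0\le t\le t+\delta\le1$ and some constant $C>0$. The maximum is taken over $j\in\{1,\dots,M(T)\}$. *)

theory Defs
  imports "HOL-Probability.Probability"
begin

definition holder_cont_01 :: "(real \<Rightarrow> real) \<Rightarrow> real \<Rightarrow> bool" where
  "holder_cont_01 f \<beta> \<longleftrightarrow>
     (\<exists>C>0. \<forall>t \<delta>. 0 \<le> t \<and> 0 \<le> \<delta> \<and> t + \<delta> \<le> 1 \<longrightarrow> \<bar>f (t + \<delta>) - f t\<bar> \<le> C * \<delta> powr \<beta>)"

definition nh_poisson_process ::
    "'a measure \<Rightarrow> real \<Rightarrow> (real \<Rightarrow> real) \<Rightarrow> (real \<Rightarrow> 'a \<Rightarrow> nat) \<Rightarrow> bool" where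
  "nh_poisson_process M T lam N \<longleftrightarrow>
     prob_space M \<and>
     (\<forall>t\<in>{0..T}. N t \<in> measurable M (count_space UNIV)) \<and>
     (\<forall>\<omega>\<in>space M.
        N 0 \<omega> = 0 \<and>
        mono_on {0..T} (\<lambda>t. N t \<omega>) \<and>
        (\<forall>t\<in>{0..<T}. continuous (at_right t) (\<lambda>s. real (N s \<omega>))) \<and>
        (\<forall>t\<in>{0<..T}. \<exists>\<epsilon>>0. \<forall>s\<in>{t - \<epsilon><..<t}. N t \<omega> \<le> N s \<omega> + 1)) \<and>
     (\<forall>(n::nat) (t::nat \<Rightarrow> real).
        (\<forall>i\<le>n. t i \<in> {0..T}) \<and> (\<forall>i<n. t i \<le> t (Suc i)) \<longrightarrow>
        prob_space.indep_vars M (\<lambda>_. count_space UNIV)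
          (\<lambda>i \<omega>. N (t (Suc i)) \<omega> - N (t i) \<omega>) {..<n}) \<and>
     (\<forall>s t (k::nat). 0 \<le> s \<and> s \<le> t \<and> t \<le> T \<longrightarrow>
        measure M {\<omega> \<in> space M. N t \<omega> - N s \<omega> = k} =
          exp (- integral {s..t} lam) * (integral {s..t} lam) ^ k / fact k)"

text \<open>Number of refresh-time sampling intervals M(T) = ceil(N_T(T)/Nbar)
  (taken to be at least 1, so that for N_T(T) = 0 the single interval [0,T] is used).\<close>
definition rtts_count :: "nat \<Rightarrow> real \<Rightarrow> (real \<Rightarrow> nat) \<Rightarrow> nat" where
  "rtts_count Nbar T cnt = max 1 (nat \<lceil>real (cnt T) / real Nbar\<rceil>)"

definition rtts_tau :: "nat \<Rightarrow> real \<Rightarrow> (real \<Rightarrow> nat) \<Rightarrow> nat \<Rightarrow> real" where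
  "rtts_tau Nbar T cnt j =
     (if rtts_count Nbar T cnt \<le> j then T
      else Inf {t \<in> {0..T}. j * Nbar \<le> cnt t})"

definition rtts_max_spacing :: "nat \<Rightarrow> real \<Rightarrow> (real \<Rightarrow> nat) \<Rightarrow> real" where
  "rtts_max_spacing Nbar T cnt =
     Max ((\<lambda>j. rtts_tau Nbar T cnt j - rtts_tau Nbar T cnt (j - 1)) ` {1..rtts_count Nbar T cnt})"

definition unif_integrable_on :: "'i set \<Rightarrow> ('i \<Rightarrow> 'a measure) \<Rightarrow> ('i \<Rightarrow> 'a \<Rightarrow> real) \<Rightarrow> bool" where
  "unif_integrable_on I M X \<longleftrightarrow>
     (\<forall>n\<in>I. integrable (M n) (X n)) \<and>
     (\<forall>\<epsilon>>0. \<exists>K. \<forall>n\<in>I.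
        (\<integral>\<omega>. \<bar>X n \<omega>\<bar> * indicator {\<omega>. K < \<bar>X n \<omega>\<bar>} \<omega> \<partial>M n) \<le> \<epsilon>)"

end

theory Submission
  imports Defs "HOL-Real_Asymp.Real_Asymp"
begin

lemma cnt_ge1: "1 \<le> rtts_count Nbar T f"
  by (simp add: rtts_count_def)

lemma cnt_lt:
  assumes "Nbar \<ge> 1" "j < rtts_count Nbar T f"
  shows "j * Nbar \<le> f T"
proof (cases "j = 0")
  case False
  then have "j < nat \<lceil>real (f T) / real Nbar\<rceil>" using assms(2) by (simp add: rtts_count_def)
  then have "int j < \<lceil>real (f T) / real Nbar\<rceil>" by linarith
  then have "real j < real (f T) / real Nbar"
    by (metis less_ceiling_iff of_int_of_nat_eq)
  then have "real j * real Nbar < real (f T)" using assms(1) by (simp add: field_simps)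
  then show ?thesis by (metis less_imp_le of_nat_less_iff of_nat_mult)
qed simp

lemma cnt_ge:
  assumes "Nbar \<ge> 1"
  shows "f T \<le> rtts_count Nbar T f * Nbar"
proof -
  have "real (f T) / real Nbar \<le> real (nat \<lceil>real (f T) / real Nbar\<rceil>)"
    by linarith
  also have "\<dots> \<le> real (rtts_count Nbar T f)" by (simp add: rtts_count_def)
  finally have "real (f T) \<le> real (rtts_count Nbar T f) * real Nbar" using assms
    by (simp add: field_simps)
  then show ?thesis by (metis of_nat_le_iff of_nat_mult)
qed

lemma tau_range:
  assumes "Nbar \<ge> 1" "T \<ge> 0"
  shows "0 \<le> rtts_tau Nbar T f j \<and> rtts_tau Nbar T f j \<le> T"
proof (cases "rtts_count Nbar T f \<le> j")
  case True then show ?thesis using assms by (simp add: rtts_tau_def)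
next
  case False
  let ?S = "{t \<in> {0..T}. j * Nbar \<le> f t}"
  have TS: "T \<in> ?S" using cnt_lt[OF assms(1), of j T f] False assms by auto
  have bdd: "bdd_below ?S" by (rule bdd_belowI[of _ 0]) auto
  have "Inf ?S \<le> T" using cInf_lower[OF TS bdd] .
  moreover have "0 \<le> Inf ?S" using TS by (intro cInf_greatest) auto
  ultimately show ?thesis using False by (simp add: rtts_tau_def)
qed

lemma below_tau:
  assumes "Nbar \<ge> 1" "T \<ge> 0" "j < rtts_count Nbar T f" "0 \<le> v" "v < rtts_tau Nbar T f j"
  shows "f v < j * Nbar"
proof (rule ccontr)
  assume "\<not> f v < j * Nbar"
  let ?S = "{t \<in> {0..T}. j * Nbar \<le> f t}"
  have tau: "rtts_tau Nbar T f j = Inf ?S" using assms(3) by (simp add: rtts_tau_def)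
  have bdd: "bdd_below ?S" by (rule bdd_belowI[of _ 0]) auto
  have "v \<le> T" using tau_range[OF assms(1,2), of f j] assms(5) by simp
  then have "v \<in> ?S" using \<open>\<not> f v < j * Nbar\<close> assms by auto
  then have "Inf ?S \<le> v" using cInf_lower[OF _ bdd] by blast
  then show False using assms(5) tau by linarith
qed

lemma above_tau:
  assumes "Nbar \<ge> 1" "T \<ge> 0" "j < rtts_count Nbar T f" "mono_on {0..T} f" "u \<le> T" "rtts_tau Nbar T f j < u"
  shows "j * Nbar \<le> f u"
proof -
  let ?S = "{t \<in> {0..T}. j * Nbar \<le> f t}"
  have tau: "rtts_tau Nbar T f j = Inf ?S" using assms(3) by (simp add: rtts_tau_def)
  have TS: "T \<in> ?S" using cnt_lt[OF assms(1,3)] assms by auto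
  then have "?S \<noteq> {}" by blast
  have "Inf ?S < u" using assms(6) tau by simp
  have bdd: "bdd_below ?S" by (rule bdd_belowI[of _ 0]) auto
  obtain t where t: "t \<in> ?S" "t < u" using cInf_less_iff[OF \<open>?S \<noteq> {}\<close> bdd] \<open>Inf ?S < u\<close> by blast
  then have "f t \<le> f u" using assms(5) mono_onD[OF assms(4), of t u] by auto
  then show ?thesis using t by simp
qed

lemma spacing_small:
  assumes "Nbar \<ge> 1" "T \<ge> 0" "1 \<le> j" "j \<le> rtts_count Nbar T f" "mono_on {0..T} f"
    "rtts_tau Nbar T f (j - 1) < u" "u \<le> v" "v < rtts_tau Nbar T f j"
  shows "f v - f u \<le> Nbar"
proof -
  have tr: "0 \<le> rtts_tau Nbar T f k \<and> rtts_tau Nbar T f k \<le> T" for k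
    using tau_range[OF assms(1,2)] .
  have u: "0 \<le> u" "u \<le> T" using tr[of "j-1"] tr[of j] assms by linarith+
  have v: "0 \<le> v" "v \<le> T" using tr[of "j-1"] tr[of j] assms by linarith+
  have fu: "(j - 1) * Nbar \<le> f u"
    using above_tau[OF assms(1,2) _ assms(5) u(2) assms(6)] assms(3,4) by simp
  have jj: "j * Nbar = (j - 1) * Nbar + Nbar" using assms(3) by (cases j) auto
  show ?thesis
  proof (cases "j < rtts_count Nbar T f")
    case True
    have "f v < j * Nbar" using below_tau[OF assms(1,2) True v(1) assms(8)] .
    then show ?thesis using fu jj by linarith
  next
    case False
    then have j: "j = rtts_count Nbar T f" using assms(4) by simp
    have "f v \<le> f T" using v assms(5) assms(2) by (auto intro: mono_onD)
    also have "\<dots> \<le> j * Nbar" using cnt_ge[OF assms(1)] j by simp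
    finally show ?thesis using fu jj by linarith
  qed
qed


lemma X_range:
  assumes "Nbar \<ge> 1" "T \<ge> 0"
  shows "0 \<le> rtts_max_spacing Nbar T f \<and> rtts_max_spacing Nbar T f \<le> T"
proof -
  let ?M = "rtts_count Nbar T f"
  let ?A = "(\<lambda>j. rtts_tau Nbar T f j - rtts_tau Nbar T f (j - 1)) ` {1..?M}"
  have tr: "0 \<le> rtts_tau Nbar T f k \<and> rtts_tau Nbar T f k \<le> T" for k
    using tau_range[OF assms(1,2)] .
  have M1: "1 \<le> ?M" by (rule cnt_ge1)
  have fin: "finite ?A" by simp
  have ne: "?A \<noteq> {}" using M1 by auto
  have tM: "rtts_tau Nbar T f ?M = T" by (simp add: rtts_tau_def)
  have "rtts_tau Nbar T f ?M - rtts_tau Nbar T f (?M - 1) \<in> ?A"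
    by (rule imageI) (use M1 in auto)
  moreover have "0 \<le> rtts_tau Nbar T f ?M - rtts_tau Nbar T f (?M - 1)"
    using tM tr[of "?M - 1"] by auto
  ultimately have "0 \<le> Max ?A" using Max_ge_iff[OF fin ne] by blast
  moreover have "Max ?A \<le> T"
  proof -
    have "\<forall>x\<in>?A. x \<le> T"
    proof
      fix x assume "x \<in> ?A"
      then obtain j where "x = rtts_tau Nbar T f j - rtts_tau Nbar T f (j - 1)" by blast
      then show "x \<le> T" using tr[of j] tr[of "j - 1"] by linarith
    qed
    then show ?thesis using Max_le_iff[OF fin ne] by blast
  qed
  ultimately show ?thesis by (simp add: rtts_max_spacing_def)
qed

lemma X_big:
  assumes "Nbar \<ge> 1" "T \<ge> 0" "mono_on {0..T} f" "h > 0" "2 * h < rtts_max_spacing Nbar T f"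
  shows "\<exists>k < nat \<lceil>T / h\<rceil>. real (Suc k) * h \<le> T \<and> f (real (Suc k) * h) - f (real k * h) \<le> Nbar"
proof -
  let ?M = "rtts_count Nbar T f"
  let ?A = "(\<lambda>j. rtts_tau Nbar T f j - rtts_tau Nbar T f (j - 1)) ` {1..?M}"
  have tr: "0 \<le> rtts_tau Nbar T f k \<and> rtts_tau Nbar T f k \<le> T" for k
    using tau_range[OF assms(1,2)] .
  have M1: "1 \<le> ?M" by (rule cnt_ge1)
  have fin: "finite ?A" by simp
  have ne: "?A \<noteq> {}" using M1 by auto
  have "2 * h < Max ?A" using assms(5) by (simp add: rtts_max_spacing_def)
  then obtain j where j: "j \<in> {1..?M}" "2 * h < rtts_tau Nbar T f j - rtts_tau Nbar T f (j - 1)"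
    using Max_gr_iff[OF fin ne] by blast
  define a where "a = rtts_tau Nbar T f (j - 1)"
  define b where "b = rtts_tau Nbar T f j"
  have a0: "0 \<le> a" and bT: "b \<le> T" using tr a_def b_def by auto
  define k where "k = Suc (nat \<lfloor>a / h\<rfloor>)"
  have fl: "real (nat \<lfloor>a / h\<rfloor>) = of_int \<lfloor>a / h\<rfloor>" using a0 assms(4) by simp
  have "a / h < of_int \<lfloor>a / h\<rfloor> + 1" by linarith
  then have "a < (of_int \<lfloor>a / h\<rfloor> + 1) * h" using assms(4) by (simp add: field_simps)
  moreover have rk: "real k = of_int \<lfloor>a / h\<rfloor> + 1" using fl by (simp add: k_def)
  ultimately have ku: "a < real k * h" by simp
  have "of_int \<lfloor>a / h\<rfloor> \<le> a / h" by linarith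
  then have "of_int \<lfloor>a / h\<rfloor> * h \<le> a / h * h" using assms(4) by (intro mult_right_mono) auto
  then have "of_int \<lfloor>a / h\<rfloor> * h \<le> a" using assms(4) by simp
  then have kv: "real (Suc k) * h \<le> a + 2 * h" using rk by (simp add: algebra_simps)
  then have kv2: "real (Suc k) * h < b" using j a_def b_def by linarith
  have le: "real k * h \<le> real (Suc k) * h" using assms(4) by simp
  have "f (real (Suc k) * h) - f (real k * h) \<le> Nbar"
    using spacing_small[OF assms(1,2) _ _ assms(3), of j "real k * h" "real (Suc k) * h"]
      j ku kv2 le a_def b_def by auto
  moreover have "k < nat \<lceil>T / h\<rceil>"
  proof -
    have "real k * h < T" using kv2 bT le by linarith
    then have "real k < T / h" using assms(4) by (simp add: field_simps)
    then show ?thesis by linarith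
  qed
  moreover have "real (Suc k) * h \<le> T" using kv2 bT by linarith
  ultimately show ?thesis by blast
qed

lemma inf_le_iff:
  fixes f :: "real \<Rightarrow> nat"
  assumes "mono_on {0..T} f" "\<forall>t\<in>{0..<T}. continuous (at_right t) (\<lambda>s. real (f s))"
    "m \<le> f T" "0 \<le> s" "s < T"
  shows "Inf {t \<in> {0..T}. m \<le> f t} \<le> s \<longleftrightarrow> m \<le> f s"
proof -
  let ?S = "{t \<in> {0..T}. m \<le> f t}"
  have bdd: "bdd_below ?S" by (rule bdd_belowI[of _ 0]) auto
  have TS: "T \<in> ?S" using assms by auto
  show ?thesis
  proof
    assume "m \<le> f s"
    then have "s \<in> ?S" using assms by auto
    then show "Inf ?S \<le> s" using cInf_lower[OF _ bdd] by blast
  next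
    assume inf: "Inf ?S \<le> s"
    show "m \<le> f s"
    proof (rule ccontr)
      assume ns: "\<not> m \<le> f s"
      have "((\<lambda>x. real (f x)) \<longlongrightarrow> real (f s)) (at_right s)"
        using assms(2) assms(4,5) by (simp add: continuous_within)
      then have "eventually (\<lambda>x. real (f x) < real (f s) + 1) (at_right s)"
        by (rule order_tendstoD) simp
      then obtain b where b: "b > s" "\<forall>y>s. y < b \<longrightarrow> real (f y) < real (f s) + 1"
        unfolding eventually_at_right_field by blast
      have "min b T \<le> Inf ?S"
      proof (rule cInf_greatest)
        show "?S \<noteq> {}" using TS by blast
      next
        fix t assume t: "t \<in> ?S"
        have "s < t"
        proof (rule ccontr)
          assume "\<not> s < t"
          then have "f t \<le> f s" using t assms(1,4,5) mono_onD[OF assms(1), of t s] by auto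
          then show False using t ns by auto
        qed
        show "min b T \<le> t"
        proof (rule ccontr)
          assume "\<not> min b T \<le> t"
          then have "t < b" by simp
          then have "f t < f s + 1" using b \<open>s < t\<close> by fastforce
          moreover have "f s \<le> f t" using t \<open>s < t\<close> assms(4) mono_onD[OF assms(1), of s t] by auto
          ultimately show False using t ns by auto
        qed
      qed
      then show False using inf b assms(5) by linarith
    qed
  qed
qed

lemma nh_facts:
  assumes "nh_poisson_process P Tr lamT Nt"
  shows "prob_space P"
    and "\<And>t. t \<in> {0..Tr} \<Longrightarrow> Nt t \<in> measurable P (count_space UNIV)"
    and "\<And>\<omega>. \<omega> \<in> space P \<Longrightarrow> mono_on {0..Tr} (\<lambda>t. Nt t \<omega>)"
    and "\<And>\<omega>. \<omega> \<in> space P \<Longrightarrow> \<forall>t\<in>{0..<Tr}. continuous (at_right t) (\<lambda>s. real (Nt s \<omega>))"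
    and "\<And>s t k. 0 \<le> s \<Longrightarrow> s \<le> t \<Longrightarrow> t \<le> Tr \<Longrightarrow>
        measure P {\<omega> \<in> space P. Nt t \<omega> - Nt s \<omega> = k} =
          exp (- integral {s..t} lamT) * (integral {s..t} lamT) ^ k / fact k"
  using assms unfolding nh_poisson_process_def by blast+

lemma sets_ge:
  assumes "Nt t \<in> measurable P (count_space UNIV)"
  shows "{\<omega> \<in> space P. m \<le> Nt t \<omega>} \<in> sets P"
proof -
  have "Nt t -` {k. m \<le> k} \<inter> space P \<in> sets P" by (rule measurable_sets[OF assms]) simp
  moreover have "Nt t -` {k. m \<le> k} \<inter> space P = {\<omega> \<in> space P. m \<le> Nt t \<omega>}" by auto
  ultimately show ?thesis by simp
qed

lemma meas_Inf:
  assumes nh: "nh_poisson_process P Tr lamT Nt" and Tr: "Tr > 0"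
  shows "(\<lambda>\<omega>. Inf {t \<in> {0..Tr}. m \<le> Nt t \<omega>}) \<in> borel_measurable P"
  unfolding borel_measurable_iff_le
proof
  fix a :: real
  let ?I = "\<lambda>\<omega>. Inf {t \<in> {0..Tr}. m \<le> Nt t \<omega>}"
  let ?A = "{\<omega> \<in> space P. m \<le> Nt Tr \<omega>}"
  let ?B = "(if a < 0 then {} else if Tr \<le> a then ?A else {\<omega> \<in> space P. m \<le> Nt a \<omega>})
      \<union> (if Inf ({}::real set) \<le> a then space P - ?A else {})"
  have mA: "?A \<in> sets P" using sets_ge nh_facts(2)[OF nh] Tr by simp
  have ma: "a \<in> {0..Tr} \<Longrightarrow> {\<omega> \<in> space P. m \<le> Nt a \<omega>} \<in> sets P"
    by (rule sets_ge[OF nh_facts(2)[OF nh]])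
  have mB: "?B \<in> sets P"
    using mA ma by auto
  have "{\<omega> \<in> space P. ?I \<omega> \<le> a} = ?B"
  proof (rule set_eqI)
    fix \<omega>
    show "\<omega> \<in> {\<omega> \<in> space P. ?I \<omega> \<le> a} \<longleftrightarrow> \<omega> \<in> ?B"
    proof (cases "\<omega> \<in> space P")
      case False then show ?thesis by auto
    next
      case sp: True
      have mono: "mono_on {0..Tr} (\<lambda>t. Nt t \<omega>)" using nh_facts(3)[OF nh sp] .
      show ?thesis
      proof (cases "m \<le> Nt Tr \<omega>")
        case False
        have "{t \<in> {0..Tr}. m \<le> Nt t \<omega>} = {}"
        proof -
          have "Nt t \<omega> \<le> Nt Tr \<omega>" if "t \<in> {0..Tr}" for t
            using mono_onD[OF mono, of t Tr] that Tr by auto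
          then show ?thesis using False by fastforce
        qed
        moreover have "\<not> m \<le> Nt a \<omega>" if "0 \<le> a" "a < Tr"
          using mono_onD[OF mono, of a Tr] that False by auto
        ultimately have "?I \<omega> = Inf {}" "\<not> (0 \<le> a \<and> a < Tr \<and> m \<le> Nt a \<omega>)"
          by (metis (no_types, lifting), blast)
        then show ?thesis using sp False by auto
      next
        case True
        let ?S = "{t \<in> {0..Tr}. m \<le> Nt t \<omega>}"
        have TS: "Tr \<in> ?S" using True Tr by auto
        have bdd: "bdd_below ?S" by (rule bdd_belowI[of _ 0]) auto
        have i0: "0 \<le> Inf ?S" using TS by (intro cInf_greatest) auto
        have iT: "Inf ?S \<le> Tr" using cInf_lower[OF TS bdd] .
        have "?I \<omega> \<le> a \<longleftrightarrow> m \<le> Nt a \<omega>" if "0 \<le> a" "a < Tr"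
          using inf_le_iff[OF mono nh_facts(4)[OF nh sp] True that] by simp
        then show ?thesis using sp True i0 iT by auto
      qed
    qed
  qed
  then show "{\<omega> \<in> space P. ?I \<omega> \<le> a} \<in> sets P" using mB by simp
qed

definition tau' :: "nat \<Rightarrow> real \<Rightarrow> (real \<Rightarrow> 'a \<Rightarrow> nat) \<Rightarrow> nat \<Rightarrow> nat \<Rightarrow> 'a \<Rightarrow> real" where
  "tau' Nbar Tr Nt m j \<omega> = (if m \<le> j then Tr else Inf {t \<in> {0..Tr}. j * Nbar \<le> Nt t \<omega>})"

lemma meas_X:
  assumes nh: "nh_poisson_process P Tr lamT Nt" and Tr: "Tr > 0"
  shows "(\<lambda>\<omega>. rtts_max_spacing Nbar Tr (\<lambda>t. Nt t \<omega>)) \<in> borel_measurable P"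
proof -
  let ?g = "\<lambda>m \<omega>. Max ((\<lambda>j. tau' Nbar Tr Nt m j \<omega> - tau' Nbar Tr Nt m (j - 1) \<omega>) ` {1..m})"
  let ?c = "\<lambda>\<omega>. rtts_count Nbar Tr (\<lambda>t. Nt t \<omega>)"
  have mt: "(\<lambda>\<omega>. tau' Nbar Tr Nt m j \<omega>) \<in> borel_measurable P" for m j
  proof (cases "m \<le> j")
    case True then show ?thesis by (simp add: tau'_def)
  next
    case False then show ?thesis using meas_Inf[OF nh Tr, of "j * Nbar"] by (simp add: tau'_def)
  qed
  have mg: "(\<lambda>\<omega>. ?g m \<omega>) \<in> borel_measurable P" for m
    by (rule borel_measurable_Max) (auto intro!: borel_measurable_diff mt)
  have mc: "?c \<in> measurable P (count_space UNIV)"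
  proof -
    have "(\<lambda>n. max 1 (nat \<lceil>real n / real Nbar\<rceil>)) \<circ> Nt Tr \<in> measurable P (count_space UNIV)"
      by (rule measurable_comp[OF nh_facts(2)[OF nh] measurable_count_space]) (use Tr in auto)
    then show ?thesis by (simp add: rtts_count_def o_def)
  qed
  have "(\<lambda>\<omega>. ?g (?c \<omega>) \<omega>) \<in> borel_measurable P"
    by (rule measurable_compose_countable'[OF mg mc]) auto
  moreover have "?g (?c \<omega>) \<omega> = rtts_max_spacing Nbar Tr (\<lambda>t. Nt t \<omega>)" for \<omega>
    by (simp add: rtts_max_spacing_def rtts_tau_def tau'_def)
  ultimately show ?thesis by simp
qed

lemma pow_fact_le_exp:
  fixes x :: real
  assumes "0 \<le> x"
  shows "x ^ n / fact n \<le> exp x"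
proof -
  have s: "(\<lambda>k. x ^ k / fact k) sums exp x"
    using exp_converges[of x] by (simp add: divide_inverse_commute scaleR_conv_of_real)
  have "sum (\<lambda>k. x ^ k / fact k) {n} \<le> suminf (\<lambda>k. x ^ k / fact k)"
    by (rule sum_le_suminf) (use s assms in \<open>auto simp: sums_iff\<close>)
  then show ?thesis using s by (simp add: sums_iff)
qed

lemma poisson_term_bound:
  fixes \<mu> :: real
  assumes "0 \<le> \<mu>" "i \<le> Nb"
  shows "exp (- \<mu>) * \<mu> ^ i / fact i \<le> 2 ^ Nb * exp (- \<mu> / 2)"
proof -
  have "(\<mu> / 2) ^ i / fact i \<le> exp (\<mu> / 2)" using pow_fact_le_exp assms by simp
  then have "\<mu> ^ i / fact i \<le> 2 ^ i * exp (\<mu> / 2)"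
    by (simp add: power_divide field_simps)
  then have "exp (- \<mu>) * (\<mu> ^ i / fact i) \<le> exp (- \<mu>) * (2 ^ i * exp (\<mu> / 2))"
    by (intro mult_left_mono) auto
  also have "\<dots> = 2 ^ i * (exp (- \<mu>) * exp (\<mu> / 2))" by simp
  also have "\<dots> = 2 ^ i * exp (- \<mu> / 2)"
    by (subst exp_add[symmetric]) simp
  also have "\<dots> \<le> 2 ^ Nb * exp (- \<mu> / 2)"
    using assms(2) by (intro mult_right_mono) (auto intro: power_increasing)
  finally show ?thesis by simp
qed

lemma sets_diff_eq:
  assumes "Nt u \<in> measurable P (count_space UNIV)" "Nt v \<in> measurable P (count_space UNIV)"
  shows "{\<omega> \<in> space P. Nt v \<omega> - Nt u \<omega> = (i::nat)} \<in> sets P"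
proof -
  have "(\<lambda>\<omega>. (Nt v \<omega>, Nt u \<omega>)) \<in> measurable P (count_space UNIV \<Otimes>\<^sub>M count_space UNIV)"
    using assms by (intro measurable_Pair) auto
  then have "(\<lambda>\<omega>. (Nt v \<omega>, Nt u \<omega>)) \<in> measurable P (count_space UNIV)"
    by (simp add: pair_measure_countable)
  then have "(\<lambda>p. fst p - snd p) \<circ> (\<lambda>\<omega>. (Nt v \<omega>, Nt u \<omega>)) \<in> measurable P (count_space UNIV)"
    by (rule measurable_comp) simp
  then have "(\<lambda>\<omega>. Nt v \<omega> - Nt u \<omega>) \<in> measurable P (count_space UNIV)" by (simp add: o_def)
  from measurable_sets[OF this, of "{i}"] show ?thesis
    by (simp add: vimage_def Int_def conj_commute)
qed

lemma integral_lb: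
  fixes lamT :: "real \<Rightarrow> real"
  assumes "0 \<le> u" "u \<le> v" "v \<le> Tr" "\<forall>t\<in>{0..Tr}. c \<le> lamT t" "continuous_on {0..Tr} lamT"
  shows "c * (v - u) \<le> integral {u..v} lamT"
proof -
  have "continuous_on {u..v} lamT" using assms by (auto intro: continuous_on_subset)
  then have int: "lamT integrable_on {u..v}" by (rule integrable_continuous_interval)
  have "integral {u..v} (\<lambda>_. c) \<le> integral {u..v} lamT"
    by (rule integral_le[OF _ int]) (use assms in auto)
  then show ?thesis using assms by (simp add: algebra_simps)
qed

lemma prob_bound:
  assumes nh: "nh_poisson_process P Tr lamT Nt" and Tr: "Tr > 0" and c: "c > 0"
    and lb: "\<forall>t\<in>{0..Tr}. c \<le> lamT t" and cont: "continuous_on {0..Tr} lamT"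
    and Nbar: "Nbar \<ge> 1" and h: "h > 0"
  shows "measure P {\<omega> \<in> space P. 2 * h < rtts_max_spacing Nbar Tr (\<lambda>t. Nt t \<omega>)}
      \<le> (Tr / h + 1) * (real (Suc Nbar) * (2 ^ Nbar * exp (- (c * h) / 2)))"
proof -
  interpret prob_space P using nh_facts(1)[OF nh] .
  define B where "B = 2 ^ Nbar * exp (- (c * h) / 2)"
  define K where "K = nat \<lceil>Tr / h\<rceil>"
  define I where "I = {k. k < K \<and> real (Suc k) * h \<le> Tr}"
  define F where "F k i = {\<omega> \<in> space P. Nt (real (Suc k) * h) \<omega> - Nt (real k * h) \<omega> = i}" for k i
  have finI: "finite I" by (simp add: I_def)
  have kI: "0 \<le> real k * h" "real k * h \<le> real (Suc k) * h" "real (Suc k) * h \<le> Tr" if "k \<in> I" for k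
    using that h by (auto simp: I_def)
  have Fs: "F k i \<in> sets P" if "k \<in> I" for k i
    unfolding F_def
    by (rule sets_diff_eq; rule nh_facts(2)[OF nh]) (use kI[OF that] in auto)
  have sub: "{\<omega> \<in> space P. 2 * h < rtts_max_spacing Nbar Tr (\<lambda>t. Nt t \<omega>)} \<subseteq> (\<Union>k\<in>I. \<Union>i\<in>{..Nbar}. F k i)"
  proof
    fix \<omega> assume "\<omega> \<in> {\<omega> \<in> space P. 2 * h < rtts_max_spacing Nbar Tr (\<lambda>t. Nt t \<omega>)}"
    then have sp: "\<omega> \<in> space P" and big: "2 * h < rtts_max_spacing Nbar Tr (\<lambda>t. Nt t \<omega>)" by auto
    obtain k where k: "k < nat \<lceil>Tr / h\<rceil>" "real (Suc k) * h \<le> Tr"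
      "Nt (real (Suc k) * h) \<omega> - Nt (real k * h) \<omega> \<le> Nbar"
      using X_big[OF Nbar _ nh_facts(3)[OF nh sp] h big] Tr by auto
    then have "k \<in> I" by (simp add: I_def K_def)
    moreover have "\<omega> \<in> F k (Nt (real (Suc k) * h) \<omega> - Nt (real k * h) \<omega>)" using sp by (simp add: F_def)
    ultimately show "\<omega> \<in> (\<Union>k\<in>I. \<Union>i\<in>{..Nbar}. F k i)" using k(3) by blast
  qed
  have Fm: "measure P (F k i) \<le> B" if "k \<in> I" "i \<le> Nbar" for k i
  proof -
    define \<mu> where "\<mu> = integral {real k * h..real (Suc k) * h} lamT"
    have "measure P (F k i) = exp (- \<mu>) * \<mu> ^ i / fact i"
      unfolding F_def \<mu>_def by (rule nh_facts(5)[OF nh]) (use kI[OF that(1)] in auto)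
    moreover have mu: "c * h \<le> \<mu>"
      using integral_lb[OF kI[OF that(1)] lb cont] unfolding \<mu>_def by (simp add: algebra_simps)
    moreover have "0 \<le> \<mu>" using mu c h by (smt (verit) mult_pos_pos)
    ultimately have "measure P (F k i) \<le> 2 ^ Nbar * exp (- \<mu> / 2)"
      using poisson_term_bound[OF _ that(2)] by simp
    also have "\<dots> \<le> B" unfolding B_def using mu by (intro mult_left_mono) auto
    finally show ?thesis .
  qed
  have "measure P {\<omega> \<in> space P. 2 * h < rtts_max_spacing Nbar Tr (\<lambda>t. Nt t \<omega>)}
      \<le> measure P (\<Union>k\<in>I. \<Union>i\<in>{..Nbar}. F k i)"
    by (rule finite_measure_mono[OF sub]) (use finI Fs in auto)
  also have "\<dots> \<le> (\<Sum>k\<in>I. measure P (\<Union>i\<in>{..Nbar}. F k i))"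
    by (rule measure_UNION_le[OF finI]) (use Fs in auto)
  also have "\<dots> \<le> (\<Sum>k\<in>I. \<Sum>i\<in>{..Nbar}. measure P (F k i))"
    by (rule sum_mono, rule measure_UNION_le) (use Fs in auto)
  also have "\<dots> \<le> (\<Sum>k\<in>I. \<Sum>i\<in>{..Nbar}. B)"
    by (intro sum_mono Fm) auto
  also have "\<dots> = real (card I) * (real (Suc Nbar) * B)" by simp
  also have "\<dots> \<le> (Tr / h + 1) * (real (Suc Nbar) * B)"
  proof (rule mult_right_mono)
    have "card I \<le> card {..<K}" by (rule card_mono) (auto simp: I_def)
    then have "real (card I) \<le> real K" by simp
    also have "\<dots> \<le> Tr / h + 1"
    proof -
      have "0 < Tr / h" using Tr h by simp
      then have "0 \<le> \<lceil>Tr / h\<rceil>" by linarith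
      then have "real K = of_int \<lceil>Tr / h\<rceil>" unfolding K_def by simp
      then show ?thesis using ceiling_correct[of "Tr / h"] by linarith
    qed
    finally show "real (card I) \<le> Tr / h + 1" .
  qed (simp add: B_def)
  finally show ?thesis by (simp add: B_def)
qed

lemma limit_bound:
  fixes z e c C D :: real
  assumes "z > 0" "e > 0" "c > 0"
  shows "(\<lambda>T::nat. (2 * real T powr (e / (2 * z))) powr z / real T powr e
     + real T powr z / real T powr e * ((real T / real T powr (e / (2 * z)) + 1) *
        (C * (D * exp (- (c * real T powr (e / (2 * z))) / 2))))) \<longlonglongrightarrow> 0"
  using assms by real_asymp

lemma exp_bound:
  fixes \<eta> :: real
  assumes nh: "nh_poisson_process P Tr lamT Nt" and Tr: "Tr \<ge> 1" and c: "c > 0"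
    and lb: "\<forall>t\<in>{0..Tr}. c \<le> lamT t" and cont: "continuous_on {0..Tr} lamT"
    and Nbar: "Nbar \<ge> 1" and h: "h > 0" and z: "\<zeta> > 0"
  shows "integrable P (\<lambda>\<omega>. rtts_max_spacing Nbar Tr (\<lambda>t. Nt t \<omega>) powr \<zeta> / Tr powr \<eta>)"
    and "\<And>\<omega>. 0 \<le> rtts_max_spacing Nbar Tr (\<lambda>t. Nt t \<omega>) powr \<zeta> / Tr powr \<eta> \<and>
              rtts_max_spacing Nbar Tr (\<lambda>t. Nt t \<omega>) powr \<zeta> / Tr powr \<eta> \<le> Tr powr \<zeta> / Tr powr \<eta>"
    and "integral\<^sup>L P (\<lambda>\<omega>. rtts_max_spacing Nbar Tr (\<lambda>t. Nt t \<omega>) powr \<zeta> / Tr powr \<eta>)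
           \<le> (2 * h) powr \<zeta> / Tr powr \<eta> + Tr powr \<zeta> / Tr powr \<eta> *
           ((Tr / h + 1) * (real (Suc Nbar) * (2 ^ Nbar * exp (- (c * h) / 2))))"
proof -
  interpret prob_space P using nh_facts(1)[OF nh] .
  define Y where "Y = (\<lambda>\<omega>. rtts_max_spacing Nbar Tr (\<lambda>t. Nt t \<omega>) powr \<zeta> / Tr powr \<eta>)"
  let ?X = "\<lambda>\<omega>. rtts_max_spacing Nbar Tr (\<lambda>t. Nt t \<omega>)"
  have Tr0: "Tr > 0" using Tr by simp
  have mX[measurable]: "?X \<in> borel_measurable P" by (rule meas_X[OF nh Tr0])
  have mY: "Y \<in> borel_measurable P" unfolding Y_def by measurable
  have Xr: "0 \<le> ?X \<omega> \<and> ?X \<omega> \<le> Tr" for \<omega> using X_range[OF Nbar] Tr by simp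
  have Yb: "0 \<le> Y \<omega> \<and> Y \<omega> \<le> Tr powr \<zeta> / Tr powr \<eta>" for \<omega>
    using Xr[of \<omega>] z by (auto simp: Y_def intro!: divide_right_mono powr_mono2)
  have intY: "integrable P Y"
    by (rule integrable_const_bound[where B = "Tr powr \<zeta> / Tr powr \<eta>"]) (use Yb mY in auto)
  define a where "a = (2 * h) powr \<zeta> / Tr powr \<eta>"
  define b where "b = Tr powr \<zeta> / Tr powr \<eta>"
  define E where "E = {\<omega> \<in> space P. 2 * h < ?X \<omega>}"
  have Es: "E \<in> sets P" unfolding E_def by measurable
  have pw: "Y \<omega> \<le> a + b * indicator E \<omega>" if "\<omega> \<in> space P" for \<omega>
  proof (cases "\<omega> \<in> E")
    case True
    have "0 \<le> a" by (simp add: a_def)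
    then show ?thesis using Yb[of \<omega>] True by (simp add: b_def)
  next
    case False
    then have "?X \<omega> \<le> 2 * h" using that by (auto simp: E_def)
    then have "?X \<omega> powr \<zeta> \<le> (2 * h) powr \<zeta>" using Xr[of \<omega>] z by (intro powr_mono2) auto
    then have "Y \<omega> \<le> a" unfolding Y_def a_def by (intro divide_right_mono) auto
    then show ?thesis using False by simp
  qed
  have i1: "integrable P (\<lambda>_. a)" by simp
  have i2: "integrable P (\<lambda>\<omega>. b * indicator E \<omega>)"
    using Es by (intro Bochner_Integration.integrable_mult_right
      integrable_real_indicator) (auto simp: less_top[symmetric])
  have intR: "integrable P (\<lambda>\<omega>. a + b * indicator E \<omega>)"
    by (rule Bochner_Integration.integrable_add[OF i1 i2])
  have "integral\<^sup>L P Y \<le> integral\<^sup>L P (\<lambda>\<omega>. a + b * indicator E \<omega>)"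
    by (rule integral_mono[OF intY intR pw])
  also have "\<dots> = a + b * measure P E"
    using Es sets.sets_into_space[OF Es]
    by (simp add: Bochner_Integration.integral_add[OF i1 i2] prob_space Int_absorb2)
  also have "\<dots> \<le> a + b * ((Tr / h + 1) * (real (Suc Nbar) * (2 ^ Nbar * exp (- (c * h) / 2))))"
    using prob_bound[OF nh Tr0 c lb cont Nbar h] unfolding E_def
    by (intro add_left_mono mult_left_mono) (auto simp: b_def)
  finally have "integral\<^sup>L P Y \<le> (2 * h) powr \<zeta> / Tr powr \<eta> + Tr powr \<zeta> / Tr powr \<eta> *
           ((Tr / h + 1) * (real (Suc Nbar) * (2 ^ Nbar * exp (- (c * h) / 2))))"
    by (simp add: a_def b_def)
  then show "integral\<^sup>L P (\<lambda>\<omega>. rtts_max_spacing Nbar Tr (\<lambda>t. Nt t \<omega>) powr \<zeta> / Tr powr \<eta>)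
           \<le> (2 * h) powr \<zeta> / Tr powr \<eta> + Tr powr \<zeta> / Tr powr \<eta> *
           ((Tr / h + 1) * (real (Suc Nbar) * (2 ^ Nbar * exp (- (c * h) / 2))))" by (simp add: Y_def)
  show "integrable P (\<lambda>\<omega>. rtts_max_spacing Nbar Tr (\<lambda>t. Nt t \<omega>) powr \<zeta> / Tr powr \<eta>)"
    using intY by (simp add: Y_def)
  show "\<And>\<omega>. 0 \<le> rtts_max_spacing Nbar Tr (\<lambda>t. Nt t \<omega>) powr \<zeta> / Tr powr \<eta> \<and>
              rtts_max_spacing Nbar Tr (\<lambda>t. Nt t \<omega>) powr \<zeta> / Tr powr \<eta> \<le> Tr powr \<zeta> / Tr powr \<eta>"
    using Yb by (simp add: Y_def)
qed

theorem lemmaD3: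
  fixes M :: "nat \<Rightarrow> 'a measure"
    and N :: "nat \<Rightarrow> real \<Rightarrow> 'a \<Rightarrow> nat"
    and lam :: "real \<Rightarrow> real"
    and \<beta> \<zeta> \<eta> :: real
    and Nbar :: nat
  assumes lam_pos: "\<forall>u\<in>{0..1}. lam u > 0"
    and beta_pos: "\<beta> > 0"
    and lam_holder: "holder_cont_01 lam \<beta>"
    and poisson: "\<forall>T\<ge>1. nh_poisson_process (M T) (real T) (\<lambda>t. lam (t / real T)) (N T)"
    and Nbar: "Nbar \<ge> 1"
    and zeta: "\<zeta> > 0"
    and eta: "\<eta> > 0"
  shows "((\<lambda>T. \<integral>\<omega>. rtts_max_spacing Nbar (real T) (\<lambda>t. N T t \<omega>) powr \<zeta> / real T powr \<eta> \<partial>M T)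
           \<longlonglongrightarrow> 0) \<and>
         unif_integrable_on {1..} M
           (\<lambda>T \<omega>. rtts_max_spacing Nbar (real T) (\<lambda>t. N T t \<omega>) powr \<zeta> / real T powr \<eta>)"
  proof -
  obtain C where C: "C > 0" and hC: "\<forall>t \<delta>. 0 \<le> t \<and> 0 \<le> \<delta> \<and> t + \<delta> \<le> 1 \<longrightarrow> \<bar>lam (t + \<delta>) - lam t\<bar> \<le> C * \<delta> powr \<beta>"
    using lam_holder unfolding holder_cont_01_def by blast
  have hold: "\<bar>lam y - lam x\<bar> \<le> C * \<bar>y - x\<bar> powr \<beta>" if "x \<in> {0..1}" "y \<in> {0..1}" for x y
  proof (cases "x \<le> y")
    case True
    then show ?thesis using hC[rule_format, of x "y - x"] that by auto
  next
    case False
    then have "\<bar>lam x - lam y\<bar> \<le> C * (x - y) powr \<beta>" using hC[rule_format, of y "x - y"] that by auto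
    then show ?thesis using False by (simp add: abs_minus_commute)
  qed
  have contlam: "continuous_on {0..1} lam"
    unfolding continuous_on_iff
  proof (intro ballI allI impI)
    fix x e :: real assume x: "x \<in> {0..1}" and e: "0 < e"
    define d where "d = (e / C) powr (1 / \<beta>)"
    have d: "d > 0" using e C by (simp add: d_def)
    have dd: "d powr \<beta> = e / C" using e C beta_pos by (simp add: d_def powr_powr)
    show "\<exists>d>0. \<forall>x'\<in>{0..1}. dist x' x < d \<longrightarrow> dist (lam x') (lam x) < e"
    proof (intro exI[of _ d] conjI ballI impI d)
      fix x' assume x': "x' \<in> {0..1}" and dist: "dist x' x < d"
      have "\<bar>x' - x\<bar> powr \<beta> < d powr \<beta>"
        using dist beta_pos by (intro powr_less_mono2) (auto simp: dist_real_def)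
      then have "C * \<bar>x' - x\<bar> powr \<beta> < e" using dd C by (simp add: field_simps)
      then show "dist (lam x') (lam x) < e" using hold[OF x x'] by (simp add: dist_real_def)
    qed
  qed
  obtain x0 where x0: "x0 \<in> {0..1}" "\<forall>y\<in>{0..1}. lam x0 \<le> lam y"
    using continuous_attains_inf[OF compact_Icc _ contlam] by auto
  define c where "c = lam x0"
  have c: "c > 0" using lam_pos x0 by (simp add: c_def)
  have lbT: "\<forall>t\<in>{0..real T}. c \<le> lam (t / real T)" if "T \<ge> 1" for T :: nat
  proof
    fix t assume "t \<in> {0..real T}"
    then have "t / real T \<in> {0..1}" using that by auto
    then show "c \<le> lam (t / real T)" using x0 by (simp add: c_def)
  qed
  have contT: "continuous_on {0..real T} (\<lambda>t. lam (t / real T))" if "T \<ge> 1" for T :: nat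
    by (rule continuous_on_compose2[OF contlam]) (use that in \<open>auto intro!: continuous_intros\<close>)
  define Y where "Y = (\<lambda>T \<omega>. rtts_max_spacing Nbar (real T) (\<lambda>t. N T t \<omega>) powr \<zeta> / real T powr \<eta>)"
  define hh where "hh = (\<lambda>T::nat. real T powr (\<eta> / (2 * \<zeta>)))"
  define Bd where "Bd = (\<lambda>T::nat. (2 * real T powr (\<eta> / (2 * \<zeta>))) powr \<zeta> / real T powr \<eta>
     + real T powr \<zeta> / real T powr \<eta> * ((real T / real T powr (\<eta> / (2 * \<zeta>)) + 1) *
        (real (Suc Nbar) * (2 ^ Nbar * exp (- (c * real T powr (\<eta> / (2 * \<zeta>))) / 2)))))"
  have EB: "integrable (M T) (Y T) \<and> (\<forall>\<omega>. 0 \<le> Y T \<omega> \<and> Y T \<omega> \<le> real T powr \<zeta> / real T powr \<eta>)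
      \<and> integral\<^sup>L (M T) (Y T) \<le> Bd T" if T: "T \<ge> 1" for T :: nat
  proof -
    have nh: "nh_poisson_process (M T) (real T) (\<lambda>t. lam (t / real T)) (N T)" using poisson T by auto
    have h: "hh T > 0" using T by (simp add: hh_def)
    have T1: "1 \<le> real T" using T by simp
    have "integrable (M T) (Y T)"
      using exp_bound(1)[OF nh T1 c lbT[OF T] contT[OF T] Nbar h zeta] by (simp add: Y_def)
    moreover have "\<forall>\<omega>. 0 \<le> Y T \<omega> \<and> Y T \<omega> \<le> real T powr \<zeta> / real T powr \<eta>"
      using exp_bound(2)[OF nh T1 c lbT[OF T] contT[OF T] Nbar h zeta] by (simp add: Y_def)
    moreover have "integral\<^sup>L (M T) (Y T) \<le> Bd T"
      using exp_bound(3)[OF nh T1 c lbT[OF T] contT[OF T] Nbar h zeta] by (simp add: Y_def Bd_def hh_def)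
    ultimately show ?thesis by blast
  qed
  have lim: "(\<lambda>T. integral\<^sup>L (M T) (Y T)) \<longlonglongrightarrow> 0"
  proof (rule tendsto_sandwich[of "\<lambda>_. 0" _ _ Bd])
    show "\<forall>\<^sub>F n in sequentially. 0 \<le> integral\<^sup>L (M n) (Y n)"
      using eventually_ge_at_top[of "1::nat"]
      by eventually_elim (use EB in \<open>auto intro!: integral_nonneg\<close>)
    show "\<forall>\<^sub>F n in sequentially. integral\<^sup>L (M n) (Y n) \<le> Bd n"
      using eventually_ge_at_top[of "1::nat"] by eventually_elim (use EB in auto)
    show "(\<lambda>_. 0) \<longlonglongrightarrow> (0::real)" by simp
    show "Bd \<longlonglongrightarrow> 0" unfolding Bd_def by (rule limit_bound[OF zeta eta c])
  qed
  have ui: "unif_integrable_on {1..} M Y"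
    unfolding unif_integrable_on_def
  proof (intro conjI ballI allI impI)
    fix n :: nat assume "n \<in> {1..}"
    then show "integrable (M n) (Y n)" using EB by auto
  next
    fix \<epsilon> :: real assume eps: "\<epsilon> > 0"
    obtain N0 where N0: "\<forall>n\<ge>N0. integral\<^sup>L (M n) (Y n) < \<epsilon>"
      using order_tendstoD(2)[OF lim eps] unfolding eventually_sequentially by blast
    define K where "K = real N0 powr \<zeta>"
    show "\<exists>K. \<forall>n\<in>{1..}. (\<integral>\<omega>. \<bar>Y n \<omega>\<bar> * indicator {\<omega>. K < \<bar>Y n \<omega>\<bar>} \<omega> \<partial>M n) \<le> \<epsilon>"
    proof (intro exI[of _ K] ballI)
      fix n :: nat assume n: "n \<in> {1..}"
      then have n1: "n \<ge> 1" by simp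
      note en = EB[OF n1]
      show "(\<integral>\<omega>. \<bar>Y n \<omega>\<bar> * indicator {\<omega>. K < \<bar>Y n \<omega>\<bar>} \<omega> \<partial>M n) \<le> \<epsilon>"
      proof (cases "n < N0")
        case True
        have YK: "Y n \<omega> \<le> K" for \<omega>
        proof -
          have "Y n \<omega> \<le> real n powr \<zeta> / real n powr \<eta>" using en by blast
          also have "\<dots> \<le> real n powr \<zeta> / 1"
          proof (rule divide_left_mono)
            show "1 \<le> real n powr \<eta>" using n1 eta by (simp add: ge_one_powr_ge_zero)
          qed (use n1 in auto)
          also have "\<dots> = real n powr \<zeta>" by simp
          also have "\<dots> \<le> K" unfolding K_def using True zeta by (intro powr_mono2) auto
          finally show ?thesis .
        qed
        then have "(\<integral>\<omega>. \<bar>Y n \<omega>\<bar> * indicator {\<omega>. K < \<bar>Y n \<omega>\<bar>} \<omega> \<partial>M n) = (\<integral>\<omega>. 0 \<partial>M n)"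
          using en by (intro Bochner_Integration.integral_cong) (auto simp: indicator_def YK[THEN leD])
        then show ?thesis using eps by simp
      next
        case False
        have "(\<integral>\<omega>. \<bar>Y n \<omega>\<bar> * indicator {\<omega>. K < \<bar>Y n \<omega>\<bar>} \<omega> \<partial>M n) \<le> integral\<^sup>L (M n) (Y n)"
          using en by (intro integral_mono') (auto simp: indicator_def)
        also have "\<dots> < \<epsilon>" using N0 False by simp
        finally show ?thesis by simp
      qed
    qed
  qed
  show ?thesis using lim ui unfolding Y_def by simp
qed

end
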